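(* Let $S$ be a scheme on $X$, $\mathbb F$ a field, $x\in X$, $E_a^*=E_a^*(x)$, and let $R_i,R_j,R_\ell,R_m\in S$. If $R_{i'}R_\ell=\{R_j\}$, then $E_i^*A_mE_\ell^*\neq O$ if and only if $m=j$; moreover $E_i^*A_jE_\ell^*=E_i^*JE_\ell^*$. In particular, if $k_i=1$ or $k_\ell=1$, then there is a unique $R_n\in S$ with $E_i^*A_nE_\ell^*\neq O$, and $E_i^*A_nE_\ell^*=E_i^*JE_\ell^*$.
   Context: Let $X$ be a nonempty finite set. A scheme of class $d$ on $X$ is a partition $S=\{R_0,\dots,R_d\}$ of $X\times X$ into nonempty sets such that $R_0=\{(b,b):b\in X\}$; for each $c$ there is $c'$ with $R_{c'}=\{(f,e):(e,f)\in R_c\}$; and for all $i,j,k$ the intersection number $p_{ij}^k=|\{\ell\in X:(m,\ell)\in R_i,(\ell,n)\in R_j\}|$ does not depend on $(m,n)\in R_k$. The valency is $k_a=p_{aa'}^0$; the complex product is $R_aR_b=\{R_c\in S:p_{ab}^c>0\}$. For $y\in X$, $yR_a=\{z:(y,z)\in R_a\}$. $A_a\in M_X(\mathbb F)$ is the $(0,1)$ adjacency matrix of $R_a$, $E_a^*(y)$ is the diagonal $(0,1)$-matrix with ones exactly at positions indexed by $yR_a$, $J$ is the all-ones matrix and $O$ the zero matrix. *)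

theory Defs
  imports Main
begin

text \<open>A scheme of class d on X: relations R 0, ..., R d (indexed by nat, only indices
  up to d matter). Matrices in M_X(F) are functions 'a => 'a => 'f that vanish
  outside X x X; products sum over X.\<close>

definition int_pt :: "('a \<times> 'a) set \<Rightarrow> ('a \<times> 'a) set \<Rightarrow> 'a \<Rightarrow> 'a \<Rightarrow> nat" where
  "int_pt Ri Rj m n = card {l. (m, l) \<in> Ri \<and> (l, n) \<in> Rj}"

definition scheme :: "'a set \<Rightarrow> nat \<Rightarrow> (nat \<Rightarrow> ('a \<times> 'a) set) \<Rightarrow> bool" where
  "scheme X d R \<longleftrightarrow>
     finite X \<and> X \<noteq> {} \<and>
     (\<forall>i\<le>d. R i \<noteq> {} \<and> R i \<subseteq> X \<times> X) \<and>
     (\<forall>i\<le>d. \<forall>j\<le>d. i \<noteq> j \<longrightarrow> R i \<inter> R j = {}) \<and>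
     (\<Union>i\<in>{0..d}. R i) = X \<times> X \<and>
     R 0 = Id_on X \<and>
     (\<forall>c\<le>d. \<exists>c'\<le>d. R c' = converse (R c)) \<and>
     (\<forall>i\<le>d. \<forall>j\<le>d. \<forall>k\<le>d. \<forall>m n m' n'. (m, n) \<in> R k \<longrightarrow> (m', n') \<in> R k \<longrightarrow>
        int_pt (R i) (R j) m n = int_pt (R i) (R j) m' n')"

definition conv_idx :: "nat \<Rightarrow> (nat \<Rightarrow> ('a \<times> 'a) set) \<Rightarrow> nat \<Rightarrow> nat" where
  "conv_idx d R c = (THE c'. c' \<le> d \<and> R c' = converse (R c))"

definition int_num :: "(nat \<Rightarrow> ('a \<times> 'a) set) \<Rightarrow> nat \<Rightarrow> nat \<Rightarrow> nat \<Rightarrow> nat" where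
  "int_num R i j k = (let (m, n) = (SOME mn. mn \<in> R k) in int_pt (R i) (R j) m n)"

definition valency :: "nat \<Rightarrow> (nat \<Rightarrow> ('a \<times> 'a) set) \<Rightarrow> nat \<Rightarrow> nat" where
  "valency d R a = int_num R a (conv_idx d R a) 0"

definition complex_prod :: "nat \<Rightarrow> (nat \<Rightarrow> ('a \<times> 'a) set) \<Rightarrow> nat \<Rightarrow> nat \<Rightarrow> ('a \<times> 'a) set set" where
  "complex_prod d R a b = {R c | c. c \<le> d \<and> int_num R a b c > 0}"

definition adj_mat :: "(nat \<Rightarrow> ('a \<times> 'a) set) \<Rightarrow> nat \<Rightarrow> 'a \<Rightarrow> 'a \<Rightarrow> 'f::field" where
  "adj_mat R a y z = (if (y, z) \<in> R a then 1 else 0)"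

definition dual_idem :: "(nat \<Rightarrow> ('a \<times> 'a) set) \<Rightarrow> 'a \<Rightarrow> nat \<Rightarrow> 'a \<Rightarrow> 'a \<Rightarrow> 'f::field" where
  "dual_idem R x a y z = (if y = z \<and> (x, y) \<in> R a then 1 else 0)"

definition all_ones :: "'a set \<Rightarrow> 'a \<Rightarrow> 'a \<Rightarrow> 'f::field" where
  "all_ones X y z = (if y \<in> X \<and> z \<in> X then 1 else 0)"

definition zero_mat :: "'a \<Rightarrow> 'a \<Rightarrow> 'f::field" where
  "zero_mat y z = 0"

definition mat_mult :: "'a set \<Rightarrow> ('a \<Rightarrow> 'a \<Rightarrow> 'f::field) \<Rightarrow> ('a \<Rightarrow> 'a \<Rightarrow> 'f) \<Rightarrow> 'a \<Rightarrow> 'a \<Rightarrow> 'f" where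
  "mat_mult X M N y z = (\<Sum>w\<in>X. M y w * N w z)"

end

theory Submission
  imports Defs
begin

lemma triple_eval:
  fixes M :: "'a \<Rightarrow> 'a \<Rightarrow> 'f::field"
  assumes fin: "finite X"
  shows "mat_mult X (mat_mult X (dual_idem R x i) M) (dual_idem R x l) y z =
    (if (x,y)\<in>R i \<and> y\<in>X \<and> (x,z)\<in>R l \<and> z\<in>X then M y z else 0)"
proof -
  have inner: "mat_mult X (dual_idem R x i) M y w = (if y\<in>X \<and> (x,y)\<in>R i then M y w else 0)" for w
  proof -
    have "mat_mult X (dual_idem R x i) M y w = (\<Sum>v\<in>X. if y = v then (if (x,y)\<in>R i then M y w else 0) else 0)"
      unfolding mat_mult_def dual_idem_def by (rule sum.cong) auto
    thus ?thesis using fin by (simp add: sum.delta)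
  qed
  have "mat_mult X (mat_mult X (dual_idem R x i) M) (dual_idem R x l) y z =
     (\<Sum>w\<in>X. if w = z then (if (x,y)\<in>R i \<and> y\<in>X \<and> (x,z)\<in>R l then M y z else 0) else 0)"
    unfolding mat_mult_def[of X "mat_mult X (dual_idem R x i) M"] inner
    unfolding dual_idem_def by (rule sum.cong) auto
  thus ?thesis using fin by (simp add: sum.delta')
qed

lemma nz_iff:
  fixes F :: "'a \<Rightarrow> 'a \<Rightarrow> 'f::field"
  shows "F \<noteq> zero_mat \<longleftrightarrow> (\<exists>y z. F y z \<noteq> 0)"
  unfolding zero_mat_def by (auto simp: fun_eq_iff)

lemma scheme_facts:
  assumes S: "scheme X d R"
  shows "finite X" "\<And>i. i\<le>d \<Longrightarrow> R i \<noteq> {}" "\<And>i. i\<le>d \<Longrightarrow> R i \<subseteq> X \<times> X"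
    "\<And>i j. i\<le>d \<Longrightarrow> j\<le>d \<Longrightarrow> i \<noteq> j \<Longrightarrow> R i \<inter> R j = {}"
    "(\<Union>i\<in>{0..d}. R i) = X \<times> X" "R 0 = Id_on X"
    "\<And>c. c\<le>d \<Longrightarrow> \<exists>c'\<le>d. R c' = converse (R c)"
    "\<And>i j k m n m' n'. i\<le>d \<Longrightarrow> j\<le>d \<Longrightarrow> k\<le>d \<Longrightarrow> (m, n) \<in> R k \<Longrightarrow> (m', n') \<in> R k \<Longrightarrow>
        int_pt (R i) (R j) m n = int_pt (R i) (R j) m' n'"
proof -
  note D = S[unfolded scheme_def]
  show "finite X" using D by (elim conjE)
  show "(\<Union>i\<in>{0..d}. R i) = X \<times> X" using D by (elim conjE)
  show "R 0 = Id_on X" using D by (elim conjE)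
  have a: "\<forall>i\<le>d. R i \<noteq> {} \<and> R i \<subseteq> X \<times> X" using D by (elim conjE)
  have b: "\<forall>i\<le>d. \<forall>j\<le>d. i \<noteq> j \<longrightarrow> R i \<inter> R j = {}" using D by (elim conjE)
  have c: "\<forall>c\<le>d. \<exists>c'\<le>d. R c' = converse (R c)" using D by (elim conjE)
  have e: "\<forall>i\<le>d. \<forall>j\<le>d. \<forall>k\<le>d. \<forall>m n m' n'. (m, n) \<in> R k \<longrightarrow> (m', n') \<in> R k \<longrightarrow>
        int_pt (R i) (R j) m n = int_pt (R i) (R j) m' n'" using D by (elim conjE)
  show "\<And>i. i\<le>d \<Longrightarrow> R i \<noteq> {}" "\<And>i. i\<le>d \<Longrightarrow> R i \<subseteq> X \<times> X" using a by auto
  show "\<And>i j. i\<le>d \<Longrightarrow> j\<le>d \<Longrightarrow> i \<noteq> j \<Longrightarrow> R i \<inter> R j = {}" using b by auto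
  show "\<And>c. c\<le>d \<Longrightarrow> \<exists>c'\<le>d. R c' = converse (R c)" using c by auto
  show "\<And>i j k m n m' n'. i\<le>d \<Longrightarrow> j\<le>d \<Longrightarrow> k\<le>d \<Longrightarrow> (m, n) \<in> R k \<Longrightarrow> (m', n') \<in> R k \<Longrightarrow>
        int_pt (R i) (R j) m n = int_pt (R i) (R j) m' n'"
  proof -
    fix i j k m n m' n' assume "i\<le>d" "j\<le>d" "k\<le>d" "(m, n) \<in> R k" "(m', n') \<in> R k"
    thus "int_pt (R i) (R j) m n = int_pt (R i) (R j) m' n'" using e by blast
  qed
qed

lemma scheme_nonempty_nbhd:
  assumes S: "scheme X d R" and x: "x \<in> X" and a: "a \<le> d"
  shows "\<exists>y. (x,y) \<in> R a"
proof -
  obtain u v where uv: "(u,v) \<in> R a" using scheme_facts(2)[OF S a] by auto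
  have uX: "u \<in> X" using uv scheme_facts(3)[OF S a] by auto
  obtain a' where a': "a' \<le> d" "R a' = converse (R a)" using scheme_facts(7)[OF S a] by auto
  have "{l. (u,l) \<in> R a \<and> (l,u) \<in> R a'} \<subseteq> X" using scheme_facts(3)[OF S a] by auto
  hence "finite {l. (u,l) \<in> R a \<and> (l,u) \<in> R a'}" using scheme_facts(1)[OF S] finite_subset by blast
  moreover have "v \<in> {l. (u,l) \<in> R a \<and> (l,u) \<in> R a'}" using uv a' by auto
  ultimately have "int_pt (R a) (R a') u u > 0" unfolding int_pt_def
    using card_gt_0_iff by blast
  moreover have u0: "(u,u) \<in> R 0" and x0: "(x,x) \<in> R 0" using uX x scheme_facts(6)[OF S] by auto
  have "int_pt (R a) (R a') u u = int_pt (R a) (R a') x x"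
    using scheme_facts(8)[OF S a a'(1) le0 u0 x0] .
  ultimately have "card {l. (x,l) \<in> R a \<and> (l,x) \<in> R a'} > 0" unfolding int_pt_def by simp
  hence "{l. (x,l) \<in> R a \<and> (l,x) \<in> R a'} \<noteq> {}" by (metis card.empty less_irrefl)
  thus ?thesis by auto
qed

lemma key:
  assumes S: "scheme X d R" and x: "x \<in> X" and i: "i \<le> d" and l: "l \<le> d" and n: "n \<le> d"
    and H: "\<And>y z. (x,y)\<in>R i \<Longrightarrow> (x,z)\<in>R l \<Longrightarrow> (y,z) \<in> R n"
  shows "(\<forall>m\<le>d. mat_mult X (mat_mult X (dual_idem R x i) (adj_mat R m)) (dual_idem R x l)
                         \<noteq> (zero_mat :: 'a \<Rightarrow> 'a \<Rightarrow> 'f::field) \<longleftrightarrow> m = n) \<and>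
              mat_mult X (mat_mult X (dual_idem R x i) (adj_mat R n)) (dual_idem R x l)
                = mat_mult X (mat_mult X (dual_idem R x i) (all_ones X)) (dual_idem R x l :: 'a \<Rightarrow> 'a \<Rightarrow> 'f)"
proof -
  from S have fin: "finite X" and sub: "\<And>i. i\<le>d \<Longrightarrow> R i \<noteq> {} \<and> R i \<subseteq> X \<times> X"
    and disj: "\<forall>i\<le>d. \<forall>j\<le>d. i \<noteq> j \<longrightarrow> R i \<inter> R j = {}"
    unfolding scheme_def by auto
  obtain y0 where y0: "(x,y0) \<in> R i" using scheme_nonempty_nbhd[OF S x i] by auto
  obtain z0 where z0: "(x,z0) \<in> R l" using scheme_nonempty_nbhd[OF S x l] by auto
  have X0: "y0 \<in> X" "z0 \<in> X" using y0 z0 sub[OF i] sub[OF l] by auto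
  show ?thesis
  proof (intro conjI allI impI)
    fix m assume m: "m \<le> d"
    show "mat_mult X (mat_mult X (dual_idem R x i) (adj_mat R m)) (dual_idem R x l)
                         \<noteq> (zero_mat :: 'a \<Rightarrow> 'a \<Rightarrow> 'f::field) \<longleftrightarrow> m = n"
    proof
      assume "mat_mult X (mat_mult X (dual_idem R x i) (adj_mat R m)) (dual_idem R x l)
                         \<noteq> (zero_mat :: 'a \<Rightarrow> 'a \<Rightarrow> 'f::field)"
      then obtain y z where "(x,y)\<in>R i" "(x,z)\<in>R l" "(y,z) \<in> R m"
        unfolding nz_iff triple_eval[OF fin] adj_mat_def by (auto split: if_splits)
      with H have "(y,z) \<in> R m \<inter> R n" by auto
      thus "m = n" using disj m n by blast
    next
      assume "m = n"
      hence "mat_mult X (mat_mult X (dual_idem R x i) (adj_mat R m)) (dual_idem R x l) y0 z0 = (1::'f)"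
        unfolding triple_eval[OF fin] adj_mat_def using y0 z0 X0 H by auto
      thus "mat_mult X (mat_mult X (dual_idem R x i) (adj_mat R m)) (dual_idem R x l)
                         \<noteq> (zero_mat :: 'a \<Rightarrow> 'a \<Rightarrow> 'f::field)" unfolding zero_mat_def by (metis one_neq_zero)
    qed
  next
    show "mat_mult X (mat_mult X (dual_idem R x i) (adj_mat R n)) (dual_idem R x l)
                = mat_mult X (mat_mult X (dual_idem R x i) (all_ones X)) (dual_idem R x l :: 'a \<Rightarrow> 'a \<Rightarrow> 'f)"
      by (rule ext, rule ext) (auto simp: triple_eval[OF fin] adj_mat_def all_ones_def H)
  qed
qed

lemma idx_unique:
  assumes S: "scheme X d R" and "a \<le> d" "b \<le> d" "R a = R b"
  shows "a = b"
  using scheme_facts(2,4)[OF S] assms by blast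

lemma conv_idx_props:
  assumes S: "scheme X d R" and c: "c \<le> d"
  shows "conv_idx d R c \<le> d \<and> R (conv_idx d R c) = converse (R c)"
proof -
  obtain c' where c': "c' \<le> d" "R c' = converse (R c)" using scheme_facts(7)[OF S c] by auto
  have "conv_idx d R c = c'" unfolding conv_idx_def
    by (rule the_equality) (use c' idx_unique[OF S] in auto)
  thus ?thesis using c' by simp
qed

lemma int_pt_pos:
  assumes S: "scheme X d R" and a: "a \<le> d" and "(y,w) \<in> R a" "(w,z) \<in> R b"
  shows "int_pt (R a) (R b) y z > 0"
proof -
  have "{l. (y,l) \<in> R a \<and> (l,z) \<in> R b} \<subseteq> X" using scheme_facts(3)[OF S a] by auto
  hence "finite {l. (y,l) \<in> R a \<and> (l,z) \<in> R b}" using scheme_facts(1)[OF S] finite_subset by blast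
  moreover have "w \<in> {l. (y,l) \<in> R a \<and> (l,z) \<in> R b}" using assms by auto
  ultimately show ?thesis unfolding int_pt_def using card_gt_0_iff by blast
qed

lemma int_num_pos:
  assumes S: "scheme X d R" and a: "a \<le> d" and b: "b \<le> d" and c: "c \<le> d"
    and yz: "(y,z) \<in> R c" and "(y,w) \<in> R a" "(w,z) \<in> R b"
  shows "int_num R a b c > 0"
proof -
  have ne: "\<exists>mn. mn \<in> R c" using yz by auto
  obtain m n where mn: "(SOME mn. mn \<in> R c) = (m,n)" by (cases "SOME mn. mn \<in> R c") auto
  have "(m,n) \<in> R c" using someI_ex[OF ne] mn by simp
  hence "int_num R a b c = int_pt (R a) (R b) y z"
    unfolding int_num_def mn using scheme_facts(8)[OF S a b c \<open>(m,n) \<in> R c\<close> yz] by simp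
  thus ?thesis using int_pt_pos[OF S a assms(6,7)] by simp
qed

lemma valency_one:
  assumes S: "scheme X d R" and x: "x \<in> X" and a: "a \<le> d" and v: "valency d R a = 1"
  shows "\<exists>y0. \<forall>y. (x,y) \<in> R a \<longleftrightarrow> y = y0"
proof -
  define a' where "a' = conv_idx d R a"
  have a': "a' \<le> d" "R a' = converse (R a)" using conv_idx_props[OF S a] a'_def by auto
  have ne: "\<exists>mn. mn \<in> R 0" using x scheme_facts(6)[OF S] by auto
  obtain m n where mn: "(SOME mn. mn \<in> R 0) = (m,n)" by (cases "SOME mn. mn \<in> R 0") auto
  have "(m,n) \<in> R 0" using someI_ex[OF ne] mn by simp
  moreover have "(x,x) \<in> R 0" using x scheme_facts(6)[OF S] by auto
  ultimately have "valency d R a = int_pt (R a) (R a') x x"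
    unfolding valency_def int_num_def a'_def[symmetric] mn using scheme_facts(8)[OF S a a'(1) le0 \<open>(m,n) \<in> R 0\<close> \<open>(x,x) \<in> R 0\<close>] by simp
  also have "\<dots> = card {y. (x,y) \<in> R a}" unfolding int_pt_def a'(2) by simp
  finally have "card {y. (x,y) \<in> R a} = 1" using v by simp
  then obtain y0 where "{y. (x,y) \<in> R a} = {y0}" by (metis card_1_singletonE)
  thus ?thesis by auto
qed

lemma some_rel:
  assumes S: "scheme X d R" and "y \<in> X" "z \<in> X"
  shows "\<exists>c\<le>d. (y,z) \<in> R c"
proof -
  have "(y,z) \<in> (\<Union>i\<in>{0..d}. R i)" using scheme_facts(5)[OF S] assms(2,3) by simp
  thus ?thesis by auto
qed

theorem lemma3p2:
  fixes X :: "'a set" and d :: nat and R :: "nat \<Rightarrow> ('a \<times> 'a) set" and x :: 'a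
  assumes "scheme X d R" and "x \<in> X"
  shows "(\<forall>i\<le>d. \<forall>j\<le>d. \<forall>l\<le>d.
            complex_prod d R (conv_idx d R i) l = {R j} \<longrightarrow>
              (\<forall>m\<le>d. mat_mult X (mat_mult X (dual_idem R x i) (adj_mat R m)) (dual_idem R x l)
                         \<noteq> (zero_mat :: 'a \<Rightarrow> 'a \<Rightarrow> 'f::field) \<longleftrightarrow> m = j) \<and>
              mat_mult X (mat_mult X (dual_idem R x i) (adj_mat R j)) (dual_idem R x l)
                = mat_mult X (mat_mult X (dual_idem R x i) (all_ones X)) (dual_idem R x l :: 'a \<Rightarrow> 'a \<Rightarrow> 'f))
       \<and> (\<forall>i\<le>d. \<forall>l\<le>d. valency d R i = 1 \<or> valency d R l = 1 \<longrightarrow>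
            (\<exists>!n. n \<le> d \<and> mat_mult X (mat_mult X (dual_idem R x i) (adj_mat R n)) (dual_idem R x l)
                         \<noteq> (zero_mat :: 'a \<Rightarrow> 'a \<Rightarrow> 'f)) \<and>
            (\<forall>n\<le>d. mat_mult X (mat_mult X (dual_idem R x i) (adj_mat R n)) (dual_idem R x l)
                         \<noteq> (zero_mat :: 'a \<Rightarrow> 'a \<Rightarrow> 'f) \<longrightarrow>
                    mat_mult X (mat_mult X (dual_idem R x i) (adj_mat R n)) (dual_idem R x l)
                      = mat_mult X (mat_mult X (dual_idem R x i) (all_ones X)) (dual_idem R x l :: 'a \<Rightarrow> 'a \<Rightarrow> 'f)))"
proof -
  have S: "scheme X d R" using assms(1) .
  have x: "x \<in> X" using assms(2) .
  have nonempty_pt: "\<exists>w. (m,w) \<in> Ra \<and> (w,n) \<in> Rb" if "int_pt Ra Rb m n > 0" for Ra Rb m n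
  proof -
    from that have "{w. (m,w) \<in> Ra \<and> (w,n) \<in> Rb} \<noteq> {}" unfolding int_pt_def by (metis card.empty less_irrefl)
    thus ?thesis by auto
  qed
  have P1: "(\<forall>m\<le>d. mat_mult X (mat_mult X (dual_idem R x i) (adj_mat R m)) (dual_idem R x l)
                         \<noteq> (zero_mat :: 'a \<Rightarrow> 'a \<Rightarrow> 'f::field) \<longleftrightarrow> m = j) \<and>
              mat_mult X (mat_mult X (dual_idem R x i) (adj_mat R j)) (dual_idem R x l)
                = mat_mult X (mat_mult X (dual_idem R x i) (all_ones X)) (dual_idem R x l :: 'a \<Rightarrow> 'a \<Rightarrow> 'f)"
    if i: "i \<le> d" and j: "j \<le> d" and l: "l \<le> d" and cp: "complex_prod d R (conv_idx d R i) l = {R j}" for i j l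
  proof (rule key[OF S x i l j])
    fix y z assume y: "(x,y) \<in> R i" and z: "(x,z) \<in> R l"
    define i' where "i' = conv_idx d R i"
    have i': "i' \<le> d" "R i' = converse (R i)" using conv_idx_props[OF S i] i'_def by auto
    have "y \<in> X" "z \<in> X" using y z scheme_facts(3)[OF S i] scheme_facts(3)[OF S l] by auto
    then obtain c where c: "c \<le> d" "(y,z) \<in> R c" using some_rel[OF S] by blast
    have "int_num R i' l c > 0" using int_num_pos[OF S i'(1) l c(1) c(2), of x] y z i'(2) by auto
    hence "R c \<in> complex_prod d R (conv_idx d R i) l" unfolding complex_prod_def i'_def[symmetric] using c by auto
    hence "R c = R j" using cp by simp
    thus "(y,z) \<in> R j" using c by simp
  qed
  have P2: "\<exists>n\<le>d. \<forall>y z. (x,y)\<in>R i \<longrightarrow> (x,z)\<in>R l \<longrightarrow> (y,z) \<in> R n"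
    if i: "i \<le> d" and l: "l \<le> d" and v: "valency d R i = 1 \<or> valency d R l = 1" for i l
  proof (cases "valency d R i = 1")
    case True
    then obtain y0 where y0: "\<And>y. (x,y) \<in> R i \<longleftrightarrow> y = y0" using valency_one[OF S x i] by blast
    obtain z1 where z1: "(x,z1) \<in> R l" using scheme_nonempty_nbhd[OF S x l] by auto
    have "y0 \<in> X" "z1 \<in> X" using y0 z1 scheme_facts(3)[OF S i] scheme_facts(3)[OF S l] by auto
    then obtain c where c: "c \<le> d" "(y0,z1) \<in> R c" using some_rel[OF S] by blast
    show ?thesis
    proof (intro exI[of _ c] conjI allI impI)
      fix y z assume y: "(x,y)\<in>R i" and z: "(x,z)\<in>R l"
      have "int_pt (R i) (R c) x z1 > 0" using int_pt_pos[OF S i, of x y0 z1 c] y0 c by auto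
      moreover have "int_pt (R i) (R c) x z1 = int_pt (R i) (R c) x z"
        using scheme_facts(8)[OF S i c(1) l z1 z] .
      ultimately have "int_pt (R i) (R c) x z > 0" by simp
      hence "\<exists>w. (x,w) \<in> R i \<and> (w,z) \<in> R c" by (rule nonempty_pt)
      then obtain w where "(x,w) \<in> R i" "(w,z) \<in> R c" by blast
      moreover have "w = y0" "y = y0" using y0 \<open>(x,w) \<in> R i\<close> y by blast+
      ultimately show "(y,z) \<in> R c" by simp
    qed (use c in auto)
  next
    case False
    hence "valency d R l = 1" using v by auto
    then obtain z0 where z0: "\<And>z. (x,z) \<in> R l \<longleftrightarrow> z = z0" using valency_one[OF S x l] by blast
    obtain y1 where y1: "(x,y1) \<in> R i" using scheme_nonempty_nbhd[OF S x i] by auto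
    have "y1 \<in> X" "z0 \<in> X" using y1 z0 scheme_facts(3)[OF S i] scheme_facts(3)[OF S l] by auto
    then obtain c where c: "c \<le> d" "(y1,z0) \<in> R c" using some_rel[OF S] by blast
    obtain c' where c': "c' \<le> d" "R c' = converse (R c)" using scheme_facts(7)[OF S c(1)] by auto
    show ?thesis
    proof (intro exI[of _ c] conjI allI impI)
      fix y z assume y: "(x,y)\<in>R i" and z: "(x,z)\<in>R l"
      have "int_pt (R l) (R c') x y1 > 0" using int_pt_pos[OF S l, of x z0 y1 c'] z0 c c' by auto
      moreover have "int_pt (R l) (R c') x y1 = int_pt (R l) (R c') x y"
        using scheme_facts(8)[OF S l c'(1) i y1 y] .
      ultimately have "int_pt (R l) (R c') x y > 0" by simp
      hence "\<exists>w. (x,w) \<in> R l \<and> (w,y) \<in> R c'" by (rule nonempty_pt)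
      then obtain w where "(x,w) \<in> R l" "(w,y) \<in> R c'" by blast
      moreover have "w = z0" "z = z0" using z0 \<open>(x,w) \<in> R l\<close> z by blast+
      ultimately show "(y,z) \<in> R c" using c'(2) by simp
    qed (use c in auto)
  qed
  show ?thesis
  proof (rule conjI)
    show "(\<forall>i\<le>d. \<forall>j\<le>d. \<forall>l\<le>d.
            complex_prod d R (conv_idx d R i) l = {R j} \<longrightarrow>
              (\<forall>m\<le>d. mat_mult X (mat_mult X (dual_idem R x i) (adj_mat R m)) (dual_idem R x l)
                         \<noteq> (zero_mat :: 'a \<Rightarrow> 'a \<Rightarrow> 'f::field) \<longleftrightarrow> m = j) \<and>
              mat_mult X (mat_mult X (dual_idem R x i) (adj_mat R j)) (dual_idem R x l)
                = mat_mult X (mat_mult X (dual_idem R x i) (all_ones X)) (dual_idem R x l :: 'a \<Rightarrow> 'a \<Rightarrow> 'f))"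
    proof (intro allI impI)
      fix i j l assume "i \<le> d" "j \<le> d" "l \<le> d" "complex_prod d R (conv_idx d R i) l = {R j}"
      from P1[OF this] show "(\<forall>m\<le>d. mat_mult X (mat_mult X (dual_idem R x i) (adj_mat R m)) (dual_idem R x l)
                         \<noteq> (zero_mat :: 'a \<Rightarrow> 'a \<Rightarrow> 'f::field) \<longleftrightarrow> m = j) \<and>
              mat_mult X (mat_mult X (dual_idem R x i) (adj_mat R j)) (dual_idem R x l)
                = mat_mult X (mat_mult X (dual_idem R x i) (all_ones X)) (dual_idem R x l :: 'a \<Rightarrow> 'a \<Rightarrow> 'f)" .
    qed
  next
    show "(\<forall>i\<le>d. \<forall>l\<le>d. valency d R i = 1 \<or> valency d R l = 1 \<longrightarrow>
            (\<exists>!n. n \<le> d \<and> mat_mult X (mat_mult X (dual_idem R x i) (adj_mat R n)) (dual_idem R x l)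
                         \<noteq> (zero_mat :: 'a \<Rightarrow> 'a \<Rightarrow> 'f)) \<and>
            (\<forall>n\<le>d. mat_mult X (mat_mult X (dual_idem R x i) (adj_mat R n)) (dual_idem R x l)
                         \<noteq> (zero_mat :: 'a \<Rightarrow> 'a \<Rightarrow> 'f) \<longrightarrow>
                    mat_mult X (mat_mult X (dual_idem R x i) (adj_mat R n)) (dual_idem R x l)
                      = mat_mult X (mat_mult X (dual_idem R x i) (all_ones X)) (dual_idem R x l :: 'a \<Rightarrow> 'a \<Rightarrow> 'f)))"
    proof (intro allI impI)
    fix i l assume i: "i \<le> d" and l: "l \<le> d" and v: "valency d R i = 1 \<or> valency d R l = 1"
    obtain n where n: "n \<le> d" and H: "\<And>y z. (x,y)\<in>R i \<Longrightarrow> (x,z)\<in>R l \<Longrightarrow> (y,z) \<in> R n"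
      using P2[OF i l v] by blast
    note K = key[OF S x i l n H, where 'f='f]
    have K1: "\<And>m. m \<le> d \<Longrightarrow> (mat_mult X (mat_mult X (dual_idem R x i) (adj_mat R m)) (dual_idem R x l)
                         \<noteq> (zero_mat :: 'a \<Rightarrow> 'a \<Rightarrow> 'f)) = (m = n)"
      using conjunct1[OF K] by blast
    have K2: "mat_mult X (mat_mult X (dual_idem R x i) (adj_mat R n)) (dual_idem R x l)
                      = mat_mult X (mat_mult X (dual_idem R x i) (all_ones X)) (dual_idem R x l :: 'a \<Rightarrow> 'a \<Rightarrow> 'f)"
      using conjunct2[OF K] .
    show "(\<exists>!n. n \<le> d \<and> mat_mult X (mat_mult X (dual_idem R x i) (adj_mat R n)) (dual_idem R x l)
                         \<noteq> (zero_mat :: 'a \<Rightarrow> 'a \<Rightarrow> 'f)) \<and>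
            (\<forall>n\<le>d. mat_mult X (mat_mult X (dual_idem R x i) (adj_mat R n)) (dual_idem R x l)
                         \<noteq> (zero_mat :: 'a \<Rightarrow> 'a \<Rightarrow> 'f) \<longrightarrow>
                    mat_mult X (mat_mult X (dual_idem R x i) (adj_mat R n)) (dual_idem R x l)
                      = mat_mult X (mat_mult X (dual_idem R x i) (all_ones X)) (dual_idem R x l :: 'a \<Rightarrow> 'a \<Rightarrow> 'f))"
    proof (rule conjI)
    show "\<exists>!n. n \<le> d \<and> mat_mult X (mat_mult X (dual_idem R x i) (adj_mat R n)) (dual_idem R x l)
                         \<noteq> (zero_mat :: 'a \<Rightarrow> 'a \<Rightarrow> 'f)"
    proof (rule ex1I[of _ n])
      show "n \<le> d \<and> mat_mult X (mat_mult X (dual_idem R x i) (adj_mat R n)) (dual_idem R x l)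
                         \<noteq> (zero_mat :: 'a \<Rightarrow> 'a \<Rightarrow> 'f)" using K1[OF n] n by simp
    next
      fix m assume "m \<le> d \<and> mat_mult X (mat_mult X (dual_idem R x i) (adj_mat R m)) (dual_idem R x l)
                         \<noteq> (zero_mat :: 'a \<Rightarrow> 'a \<Rightarrow> 'f)"
      thus "m = n" using K1 by blast
    qed
    next
    show "\<forall>n'\<le>d. mat_mult X (mat_mult X (dual_idem R x i) (adj_mat R n')) (dual_idem R x l)
                         \<noteq> (zero_mat :: 'a \<Rightarrow> 'a \<Rightarrow> 'f) \<longrightarrow>
                    mat_mult X (mat_mult X (dual_idem R x i) (adj_mat R n')) (dual_idem R x l)
                      = mat_mult X (mat_mult X (dual_idem R x i) (all_ones X)) (dual_idem R x l :: 'a \<Rightarrow> 'a \<Rightarrow> 'f)"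
    proof (intro allI impI)
      fix m assume "m \<le> d" "mat_mult X (mat_mult X (dual_idem R x i) (adj_mat R m)) (dual_idem R x l)
                         \<noteq> (zero_mat :: 'a \<Rightarrow> 'a \<Rightarrow> 'f)"
      hence "m = n" using K1 by blast
      thus "mat_mult X (mat_mult X (dual_idem R x i) (adj_mat R m)) (dual_idem R x l)
                      = mat_mult X (mat_mult X (dual_idem R x i) (all_ones X)) (dual_idem R x l :: 'a \<Rightarrow> 'a \<Rightarrow> 'f)"
        using K2 by simp
    qed
    qed
    qed
  qed
qed

end
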